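(* Let the timeline be $(\mathbb{Z},\leq)$, let $\Pi$ be a propositional DatalogMTL program, let $Q$ be a proposition and $t_B\le t_E$ integers, and let $B,E,Q'$ be propositions not occurring in $\Pi$ (nor in the datasets considered). Let $\Pi^Q=\Pi\cup\{Q'\leftarrow Q\,\mathcal{U}_{[0,\infty)}\,E,\ \bot\leftarrow B\wedge Q'\}$. Then for every dataset $\mathcal{D}^\dagger$ that is $\Pi$-consistent, the following are equivalent: (1) $(\mathcal{D}^\dagger,\Pi)\models Q@[t_B,t_E]$; (2) $\mathcal{D}^\dagger\cup\{B@\{t_B-1\},E@\{t_E+1\}\}$ is $\Pi^Q$-inconsistent.
   Context: A propositional DatalogMTL program uses only nullary predicates (propositions). $\mathfrak{M},t\models A\,\mathcal{U}_\varrho A'$ iff there is $t'$ with $t'-t\in\varrho$, $\mathfrak{M},t'\models A'$, and $\mathfrak{M},s\models A$ for all $s\in(t,t')$. A dataset is a finite set of facts $P@\iota$; it is $\Pi$-consistent if it has a model that is also a model of $\Pi$; $(\mathcal{D},\Pi)\models Q@\iota$ means every such model makes $Q$ true at every $t\in\iota$. *)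

theory Defs
  imports Main
begin

text \<open>Metric intervals (for temporal operators): (a, None) is [a,\<infinity>), (a, Some b) is [a,b].
  Over the integers every interval with integer/infinite endpoints is of this form (or empty).\<close>
type_synonym ival = "int \<times> int option"

fun ival_mem :: "ival \<Rightarrow> int \<Rightarrow> bool" where
  "ival_mem (a, None) d = (a \<le> d)"
| "ival_mem (a, Some b) d = (a \<le> d \<and> d \<le> b)"

fun wf_ival :: "ival \<Rightarrow> bool" where
  "wf_ival (a, None) = (0 \<le> a)"
| "wf_ival (a, Some b) = (0 \<le> a \<and> a \<le> b)"

datatype 'p mtl =
    MTop | MBot | MProp 'p
  | DiaMinus ival "'p mtl" | DiaPlus ival "'p mtl"
  | BoxMinus ival "'p mtl" | BoxPlus ival "'p mtl"
  | Since "'p mtl" ival "'p mtl" | Until "'p mtl" ival "'p mtl"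

type_synonym 'p interp = "int \<Rightarrow> 'p \<Rightarrow> bool"

fun holds :: "'p interp \<Rightarrow> int \<Rightarrow> 'p mtl \<Rightarrow> bool" where
  "holds M t MTop = True"
| "holds M t MBot = False"
| "holds M t (MProp p) = M t p"
| "holds M t (DiaMinus r A) = (\<exists>t'. ival_mem r (t - t') \<and> holds M t' A)"
| "holds M t (DiaPlus r A) = (\<exists>t'. ival_mem r (t' - t) \<and> holds M t' A)"
| "holds M t (BoxMinus r A) = (\<forall>t'. ival_mem r (t - t') \<longrightarrow> holds M t' A)"
| "holds M t (BoxPlus r A) = (\<forall>t'. ival_mem r (t' - t) \<longrightarrow> holds M t' A)"
| "holds M t (Since A r A') = (\<exists>t'. ival_mem r (t - t') \<and> holds M t' A' \<and>
      (\<forall>s. t' < s \<and> s < t \<longrightarrow> holds M s A))"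
| "holds M t (Until A r A') = (\<exists>t'. ival_mem r (t' - t) \<and> holds M t' A' \<and>
      (\<forall>s. t < s \<and> s < t' \<longrightarrow> holds M s A))"

fun wf_mtl :: "'p mtl \<Rightarrow> bool" where
  "wf_mtl (DiaMinus r A) = (wf_ival r \<and> wf_mtl A)"
| "wf_mtl (DiaPlus r A) = (wf_ival r \<and> wf_mtl A)"
| "wf_mtl (BoxMinus r A) = (wf_ival r \<and> wf_mtl A)"
| "wf_mtl (BoxPlus r A) = (wf_ival r \<and> wf_mtl A)"
| "wf_mtl (Since A r A') = (wf_ival r \<and> wf_mtl A \<and> wf_mtl A')"
| "wf_mtl (Until A r A') = (wf_ival r \<and> wf_mtl A \<and> wf_mtl A')"
| "wf_mtl _ = True"

fun props_mtl :: "'p mtl \<Rightarrow> 'p set" where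
  "props_mtl MTop = {}"
| "props_mtl MBot = {}"
| "props_mtl (MProp p) = {p}"
| "props_mtl (DiaMinus r A) = props_mtl A"
| "props_mtl (DiaPlus r A) = props_mtl A"
| "props_mtl (BoxMinus r A) = props_mtl A"
| "props_mtl (BoxPlus r A) = props_mtl A"
| "props_mtl (Since A r A') = props_mtl A \<union> props_mtl A'"
| "props_mtl (Until A r A') = props_mtl A \<union> props_mtl A'"

datatype 'p hatom = HProp 'p | HBoxMinus ival "'p hatom" | HBoxPlus ival "'p hatom"

fun hatom_mtl :: "'p hatom \<Rightarrow> 'p mtl" where
  "hatom_mtl (HProp p) = MProp p"
| "hatom_mtl (HBoxMinus r H) = BoxMinus r (hatom_mtl H)"
| "hatom_mtl (HBoxPlus r H) = BoxPlus r (hatom_mtl H)"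

datatype 'p rule = Rule "'p hatom" "'p mtl list" | Constraint "'p mtl list"

fun holds_rule :: "'p interp \<Rightarrow> 'p rule \<Rightarrow> bool" where
  "holds_rule M (Rule H body) =
     (\<forall>t. (\<forall>A\<in>set body. holds M t A) \<longrightarrow> holds M t (hatom_mtl H))"
| "holds_rule M (Constraint body) = (\<forall>t. \<not> (\<forall>A\<in>set body. holds M t A))"

fun wf_rule :: "'p rule \<Rightarrow> bool" where
  "wf_rule (Rule H body) = (wf_mtl (hatom_mtl H) \<and> (\<forall>A\<in>set body. wf_mtl A))"
| "wf_rule (Constraint body) = (\<forall>A\<in>set body. wf_mtl A)"

fun props_rule :: "'p rule \<Rightarrow> 'p set" where
  "props_rule (Rule H body) = props_mtl (hatom_mtl H) \<union> (\<Union>A\<in>set body. props_mtl A)"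
| "props_rule (Constraint body) = (\<Union>A\<in>set body. props_mtl A)"

definition program :: "'p rule set \<Rightarrow> bool" where
  "program \<Pi> \<longleftrightarrow> finite \<Pi> \<and> (\<forall>r\<in>\<Pi>. wf_rule r)"

definition props_prog :: "'p rule set \<Rightarrow> 'p set" where
  "props_prog \<Pi> = (\<Union>r\<in>\<Pi>. props_rule r)"

definition model_prog :: "'p interp \<Rightarrow> 'p rule set \<Rightarrow> bool" where
  "model_prog M \<Pi> \<longleftrightarrow> (\<forall>r\<in>\<Pi>. holds_rule M r)"

type_synonym dint = "int option \<times> int option"

fun dint_mem :: "dint \<Rightarrow> int \<Rightarrow> bool" where
  "dint_mem (lo, hi) t = ((case lo of None \<Rightarrow> True | Some a \<Rightarrow> a \<le> t) \<and>
                          (case hi of None \<Rightarrow> True | Some b \<Rightarrow> t \<le> b))"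

type_synonym 'p fact = "'p \<times> dint"

definition dataset :: "'p fact set \<Rightarrow> bool" where
  "dataset D \<longleftrightarrow> finite D"

definition props_data :: "'p fact set \<Rightarrow> 'p set" where
  "props_data D = fst ` D"

definition model_data :: "'p interp \<Rightarrow> 'p fact set \<Rightarrow> bool" where
  "model_data M D \<longleftrightarrow> (\<forall>(p, \<iota>)\<in>D. \<forall>t. dint_mem \<iota> t \<longrightarrow> M t p)"

definition consistent :: "'p rule set \<Rightarrow> 'p fact set \<Rightarrow> bool" where
  "consistent \<Pi> D \<longleftrightarrow> (\<exists>M. model_data M D \<and> model_prog M \<Pi>)"

definition entails :: "'p fact set \<Rightarrow> 'p rule set \<Rightarrow> 'p \<Rightarrow> dint \<Rightarrow> bool" where
  "entails D \<Pi> Q \<iota> \<longleftrightarrow>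
     (\<forall>M. model_data M D \<and> model_prog M \<Pi> \<longrightarrow> (\<forall>t. dint_mem \<iota> t \<longrightarrow> M t Q))"

end

theory Submission
  imports Defs
begin

lemma holds_agree:
  assumes "\<forall>p\<in>props_mtl A. \<forall>t. M t p = M' t p"
  shows "holds M t A = holds M' t A"
  using assms by (induction A arbitrary: t) auto

lemma hatom_agree:
  assumes "\<forall>p\<in>props_mtl (hatom_mtl H). \<forall>t. M t p = M' t p"
  shows "holds M t (hatom_mtl H) = holds M' t (hatom_mtl H)"
  using assms holds_agree by blast

lemma rule_agree:
  assumes "\<forall>p\<in>props_rule r. \<forall>t. M t p = M' t p"
  shows "holds_rule M r = holds_rule M' r"
proof (cases r)
  case (Rule H body)
  have h: "holds M t (hatom_mtl H) = holds M' t (hatom_mtl H)" for t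
    using assms Rule by (intro holds_agree) auto
  have b: "\<And>A t. A \<in> set body \<Longrightarrow> holds M t A = holds M' t A"
    using assms Rule by (intro holds_agree) auto
  show ?thesis using Rule h b by auto
next
  case (Constraint body)
  have b: "\<And>A t. A \<in> set body \<Longrightarrow> holds M t A = holds M' t A"
    using assms Constraint by (intro holds_agree) auto
  show ?thesis using Constraint b by auto
qed

theorem mainTheorem4:
  fixes \<Pi> :: "'p rule set" and D :: "'p fact set"
    and Q B E Q' :: 'p and tB tE :: int
  assumes "program \<Pi>" and "dataset D" and "tB \<le> tE"
    and "distinct [Q, B, E, Q']"
    and "B \<notin> props_prog \<Pi>" and "E \<notin> props_prog \<Pi>" and "Q' \<notin> props_prog \<Pi>"
    and "B \<notin> props_data D" and "E \<notin> props_data D" and "Q' \<notin> props_data D"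
    and "consistent \<Pi> D"
  shows "entails D \<Pi> Q (Some tB, Some tE) \<longleftrightarrow>
    \<not> consistent
        (insert (Rule (HProp Q') [Until (MProp Q) (0, None) (MProp E)])
          (insert (Constraint [MProp B, MProp Q']) \<Pi>))
        (insert (B, (Some (tB - 1), Some (tB - 1)))
          (insert (E, (Some (tE + 1), Some (tE + 1))) D))"
proof
  assume ent: "entails D \<Pi> Q (Some tB, Some tE)"
  show "\<not> consistent
        (insert (Rule (HProp Q') [Until (MProp Q) (0, None) (MProp E)])
          (insert (Constraint [MProp B, MProp Q']) \<Pi>))
        (insert (B, (Some (tB - 1), Some (tB - 1)))
          (insert (E, (Some (tE + 1), Some (tE + 1))) D))"
  proof
    assume "consistent
        (insert (Rule (HProp Q') [Until (MProp Q) (0, None) (MProp E)])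
          (insert (Constraint [MProp B, MProp Q']) \<Pi>))
        (insert (B, (Some (tB - 1), Some (tB - 1)))
          (insert (E, (Some (tE + 1), Some (tE + 1))) D))"
    then obtain M where md: "model_data M (insert (B, (Some (tB - 1), Some (tB - 1)))
          (insert (E, (Some (tE + 1), Some (tE + 1))) D))"
      and mp: "model_prog M (insert (Rule (HProp Q') [Until (MProp Q) (0, None) (MProp E)])
          (insert (Constraint [MProp B, MProp Q']) \<Pi>))"
      unfolding consistent_def by blast
    have mD: "model_data M D" using md unfolding model_data_def by blast
    have mP: "model_prog M \<Pi>" using mp unfolding model_prog_def by blast
    have qs: "\<And>t. tB \<le> t \<Longrightarrow> t \<le> tE \<Longrightarrow> M t Q"
      using ent mD mP unfolding entails_def by auto
    have hB: "M (tB - 1) B" using md unfolding model_data_def by auto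
    have hE: "M (tE + 1) E" using md unfolding model_data_def by auto
    have r1: "holds_rule M (Rule (HProp Q') [Until (MProp Q) (0, None) (MProp E)])"
      using mp unfolding model_prog_def by blast
    have "holds M (tB - 1) (Until (MProp Q) (0, None) (MProp E))"
      using hE qs assms(3) by (auto intro!: exI[of _ "tE + 1"])
    hence "M (tB - 1) Q'" using r1 by auto
    moreover have "holds_rule M (Constraint [MProp B, MProp Q'])"
      using mp unfolding model_prog_def by blast
    ultimately show False using hB by auto
  qed
next
  assume inc: "\<not> consistent
        (insert (Rule (HProp Q') [Until (MProp Q) (0, None) (MProp E)])
          (insert (Constraint [MProp B, MProp Q']) \<Pi>))
        (insert (B, (Some (tB - 1), Some (tB - 1)))
          (insert (E, (Some (tE + 1), Some (tE + 1))) D))"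
  show "entails D \<Pi> Q (Some tB, Some tE)"
  proof (rule ccontr)
    assume "\<not> entails D \<Pi> Q (Some tB, Some tE)"
    then obtain M t0 where mD: "model_data M D" and mP: "model_prog M \<Pi>"
      and t0: "tB \<le> t0" "t0 \<le> tE" and nq: "\<not> M t0 Q"
      unfolding entails_def by auto
    define M' where "M' = (\<lambda>t p. if p = B then t = tB - 1 else if p = E then t = tE + 1
        else if p = Q' then (t \<le> tE + 1 \<and> (\<forall>s. t < s \<and> s < tE + 1 \<longrightarrow> M s Q)) else M t p)"
    have dist: "Q \<noteq> B" "Q \<noteq> E" "Q \<noteq> Q'" "B \<noteq> E" "B \<noteq> Q'" "E \<noteq> Q'"
      using assms(4) by auto
    have MQ: "M' t Q = M t Q" for t using dist unfolding M'_def by auto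
    have agree: "M' t p = M t p" if "p \<notin> {B, E, Q'}" for t p
      using that unfolding M'_def by auto
    have "model_prog M' \<Pi>"
      unfolding model_prog_def
    proof
      fix r assume r: "r \<in> \<Pi>"
      have "\<forall>p\<in>props_rule r. \<forall>t. M t p = M' t p"
      proof (intro ballI allI)
        fix p t assume "p \<in> props_rule r"
        hence "p \<notin> {B, E, Q'}" using r assms(5,6,7) unfolding props_prog_def by blast
        thus "M t p = M' t p" using agree by metis
      qed
      hence "holds_rule M r = holds_rule M' r" by (rule rule_agree)
      thus "holds_rule M' r" using mP r unfolding model_prog_def by auto
    qed
    moreover have "holds_rule M' (Rule (HProp Q') [Until (MProp Q) (0, None) (MProp E)])"
    proof (simp, intro allI impI)
      fix t assume "\<exists>t'. t \<le> t' \<and> M' t' E \<and> (\<forall>s. t < s \<and> s < t' \<longrightarrow> M' s Q)"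
      then obtain t' where "t \<le> t'" "M' t' E" "\<forall>s. t < s \<and> s < t' \<longrightarrow> M' s Q" by blast
      moreover have "t' = tE + 1" using \<open>M' t' E\<close> dist unfolding M'_def by auto
      ultimately show "M' t Q'" using dist MQ unfolding M'_def by auto
    qed
    moreover have "holds_rule M' (Constraint [MProp B, MProp Q'])"
    proof (simp, intro allI)
      fix t show "M' t B \<longrightarrow> \<not> M' t Q'"
        using dist nq t0 unfolding M'_def by (auto intro!: exI[of _ t0])
    qed
    moreover have "model_data M' D"
      unfolding model_data_def
    proof (intro ballI, clarify)
      fix p i t assume pi: "(p, i) \<in> D" and "dint_mem i t"
      have "p \<notin> {B, E, Q'}" using pi assms(8,9,10) unfolding props_data_def by force
      thus "M' t p" using agree mD pi \<open>dint_mem i t\<close> unfolding model_data_def by auto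
    qed
    moreover have "model_data M' (insert (B, (Some (tB - 1), Some (tB - 1)))
          (insert (E, (Some (tE + 1), Some (tE + 1))) D))"
    proof -
      have a: "M' t B" if "tB - 1 \<le> t" "t < tB" for t using that unfolding M'_def by simp
      have b: "M' t E" if "tE + 1 \<le> t" "t \<le> tE + 1" for t using dist that unfolding M'_def by simp
      show ?thesis using a b \<open>model_data M' D\<close> unfolding model_data_def
        by auto
    qed
    ultimately have "consistent
        (insert (Rule (HProp Q') [Until (MProp Q) (0, None) (MProp E)])
          (insert (Constraint [MProp B, MProp Q']) \<Pi>))
        (insert (B, (Some (tB - 1), Some (tB - 1)))
          (insert (E, (Some (tE + 1), Some (tE + 1))) D))"
      unfolding consistent_def model_prog_def by (intro exI[of _ M']) auto
    thus False using inc by blast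
  qed
qed

end
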